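(* Let $I$ be a finite set, and let $Y=(Y_i)_{i\in I}$ and $Y'=(Y'_i)_{i\in I}$ be two independent vectors of independent random variables all having a common distribution. For $S\subseteq I$ let $Y^S_i=Y'_i$ if $i\in S$ and $Y^S_i=Y_i$ otherwise. Let $f:\mathbb{R}^I\to\mathbb{R}$ satisfy $\mathbb{E}[f(Y)^2]<\infty$, and let $\mathscr{S},\tilde{\mathscr{S}}$ be random subsets of $I$, independent of $(Y,Y')$, with $\mathscr{S}\subseteq\tilde{\mathscr{S}}$ almost surely. Then \[ \operatorname{Cov}\big(f(Y),f(Y^{\mathscr{S}})\big)\ge\operatorname{Cov}\big(f(Y),f(Y^{\tilde{\mathscr{S}}})\big). \] *)

theory Defs
  imports "HOL-Probability.Probability"
begin

definition covariance :: "'a measure \<Rightarrow> ('a \<Rightarrow> real) \<Rightarrow> ('a \<Rightarrow> real) \<Rightarrow> real" where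
  "covariance M X Z =
     integral\<^sup>L M (\<lambda>\<omega>. (X \<omega> - integral\<^sup>L M X) * (Z \<omega> - integral\<^sup>L M Z))"

definition resample :: "'i set \<Rightarrow> ('i \<Rightarrow> 'a \<Rightarrow> real) \<Rightarrow> ('i \<Rightarrow> 'a \<Rightarrow> real)
    \<Rightarrow> ('a \<Rightarrow> 'i set) \<Rightarrow> 'a \<Rightarrow> ('i \<Rightarrow> real)" where
  "resample I Y Y' S \<omega> = (\<lambda>i\<in>I. if i \<in> S \<omega> then Y' i \<omega> else Y i \<omega>)"

end

theory Submission
  imports Defs
begin


definition mix :: "'i set \<Rightarrow> 'i set \<Rightarrow> ('i \<Rightarrow> real) \<Rightarrow> ('i \<Rightarrow> real) \<Rightarrow> ('i \<Rightarrow> real)" where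
  "mix I A x y = (\<lambda>i\<in>I. if i \<in> A then y i else x i)"

locale core =
  fixes \<mu> :: "real measure" and I :: "'i set"
  assumes mu: "prob_space \<mu>" and sets_mu: "sets \<mu> = sets borel" and finI: "finite I"
begin

abbreviation "P \<equiv> PiM I (\<lambda>_. \<mu>)"

lemma space_mu[simp]: "space \<mu> = UNIV"
  using sets_eq_imp_space_eq[OF sets_mu] by simp

lemma UNIV_mu[simp]: "UNIV \<in> sets \<mu>"
  by (metis sets.top space_mu)

lemma prob_P: "prob_space P"
  by (rule prob_space_PiM) (use mu in auto)

sublocale PP: pair_prob_space P P
  by (simp add: pair_prob_space_def pair_sigma_finite_def prob_P prob_space_imp_sigma_finite)

sublocale PS: product_prob_space "\<lambda>_. \<mu>" I
  using mu by (simp add: product_prob_space_def product_sigma_finite_def prob_space_imp_sigma_finite product_prob_space_axioms_def)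

lemma mix_meas': "(\<lambda>p. mix I A (fst p) (snd p)) \<in> measurable (P \<Otimes>\<^sub>M P) P"
  unfolding mix_def by (rule measurable_restrict) auto

lemma mix_meas2[measurable]: "(\<lambda>y. mix I A x y) \<in> measurable P P"
  unfolding mix_def by (rule measurable_restrict) auto

lemma mix_meas1[measurable]: "(\<lambda>x. mix I A x y) \<in> measurable P P"
  unfolding mix_def by (rule measurable_restrict) auto

lemma mix_meas: "(\<lambda>(x,y). mix I A x y) \<in> measurable (P \<Otimes>\<^sub>M P) P"
proof -
  have "(\<lambda>p. \<lambda>i\<in>I. if i \<in> A then snd p i else fst p i) \<in> measurable (P \<Otimes>\<^sub>M P) P"
    by (rule measurable_restrict) auto
  then show ?thesis by (simp add: mix_def split_beta')
qed

lemma mix_distr: "distr (P \<Otimes>\<^sub>M P) P (\<lambda>(x,y). mix I A x y) = P"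
proof (rule PS.PiM_eqI[OF finI])
  show "sets (distr (P \<Otimes>\<^sub>M P) P (\<lambda>(x,y). mix I A x y)) = sets P" by simp
next
  fix X assume X: "\<And>i. i \<in> I \<Longrightarrow> X i \<in> sets \<mu>"
  have pre: "(\<lambda>(x,y). mix I A x y) -` PiE I X \<inter> space (P \<Otimes>\<^sub>M P) =
     PiE I (\<lambda>i. if i \<in> A then UNIV else X i) \<times> PiE I (\<lambda>i. if i \<in> A then X i else UNIV)"
    by (auto simp: space_pair_measure space_PiM mix_def PiE_iff split: if_splits)
  have "emeasure (distr (P \<Otimes>\<^sub>M P) P (\<lambda>(x,y). mix I A x y)) (PiE I X)
      = emeasure (P \<Otimes>\<^sub>M P) ((\<lambda>(x,y). mix I A x y) -` PiE I X \<inter> space (P \<Otimes>\<^sub>M P))"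
    using X by (intro emeasure_distr) (auto intro!: sets_PiM_I_finite finI mix_meas)
  also have "\<dots> = emeasure P (PiE I (\<lambda>i. if i \<in> A then UNIV else X i)) *
                  emeasure P (PiE I (\<lambda>i. if i \<in> A then X i else UNIV))"
  proof -
    have "PiE I (\<lambda>i. if i \<in> A then UNIV else X i) \<in> sets P"
      using X by (intro sets_PiM_I_finite finI) auto
    moreover have "PiE I (\<lambda>i. if i \<in> A then X i else UNIV) \<in> sets P"
      using X by (intro sets_PiM_I_finite finI) auto
    ultimately show ?thesis unfolding pre by (rule sigma_finite_measure.emeasure_pair_measure_Times[OF prob_space_imp_sigma_finite[OF prob_P]])
  qed
  also have "\<dots> = (\<Prod>i\<in>I. emeasure \<mu> (if i \<in> A then UNIV else X i)) *
                  (\<Prod>i\<in>I. emeasure \<mu> (if i \<in> A then X i else UNIV))"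
    using X by (subst (1 2) PS.emeasure_PiM) (auto simp: finI)
  also have "\<dots> = (\<Prod>i\<in>I. emeasure \<mu> (X i))"
    unfolding prod.distrib[symmetric]
    using prob_space.emeasure_space_1[OF mu]
    by (intro prod.cong) auto
  finally show "emeasure (distr (P \<Otimes>\<^sub>M P) P (\<lambda>(x,y). mix I A x y)) (PiE I X) = (\<Prod>i\<in>I. emeasure \<mu> (X i))" .
qed


declare mix_meas'[measurable]

lemma mix_empty: "x \<in> space P \<Longrightarrow> mix I {} x y = x"
  by (auto simp: mix_def space_PiM PiE_def extensional_def fun_eq_iff)

lemma mix_idem: "mix I A (mix I A x y) z = mix I A x z"
  by (auto simp: mix_def fun_eq_iff)

lemma mix_nest: "A \<subseteq> B \<Longrightarrow> mix I A (mix I B x y) z = mix I B x (mix I A y z)"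
  by (auto simp: mix_def fun_eq_iff)

lemma transfer:
  assumes [measurable]: "g \<in> borel_measurable P"
  shows "integrable (P \<Otimes>\<^sub>M P) (\<lambda>p. g (mix I A (fst p) (snd p))) \<longleftrightarrow> integrable P (g::_\<Rightarrow>real)"
    and "integral\<^sup>L (P \<Otimes>\<^sub>M P) (\<lambda>p. g (mix I A (fst p) (snd p))) = integral\<^sup>L P g"
proof -
  have e: "distr (P \<Otimes>\<^sub>M P) P (\<lambda>p. mix I A (fst p) (snd p)) = P"
    using mix_distr[of A] by (simp add: split_beta')
  show "integrable (P \<Otimes>\<^sub>M P) (\<lambda>p. g (mix I A (fst p) (snd p))) \<longleftrightarrow> integrable P g"
    using integrable_distr_eq[OF mix_meas', of g A] e by simp
  show "integral\<^sup>L (P \<Otimes>\<^sub>M P) (\<lambda>p. g (mix I A (fst p) (snd p))) = integral\<^sup>L P g"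
    using integral_distr[OF mix_meas', of g A] e by simp
qed

lemma jensen_sq:
  assumes "prob_space N" "integrable N g" "integrable N (\<lambda>x. (g x)\<^sup>2)"
  shows "(integral\<^sup>L N g)\<^sup>2 \<le> integral\<^sup>L N (\<lambda>x. (g x :: real)\<^sup>2)"
proof -
  interpret N: prob_space N by fact
  have "0 \<le> N.variance g" by (intro integral_nonneg_AE) auto
  also have "N.variance g = integral\<^sup>L N (\<lambda>x. (g x)\<^sup>2) - (integral\<^sup>L N g)\<^sup>2"
    using N.variance_eq[OF assms(2,3)] by simp
  finally show ?thesis by simp
qed

definition cond :: "'i set \<Rightarrow> (('i \<Rightarrow> real) \<Rightarrow> real) \<Rightarrow> ('i \<Rightarrow> real) \<Rightarrow> real" where
  "cond A g x = (\<integral>y. g (mix I A x y) \<partial>P)"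

lemma cond_meas[measurable]:
  assumes [measurable]: "g \<in> borel_measurable P"
  shows "cond A g \<in> borel_measurable P"
proof -
  have "(\<lambda>x. \<integral>y. g (mix I A x y) \<partial>P) \<in> borel_measurable P"
    by (rule sigma_finite_measure.borel_measurable_lebesgue_integral[OF prob_space_imp_sigma_finite[OF prob_P]]) (simp add: split_beta')
  then show ?thesis unfolding cond_def[abs_def] .
qed

lemma cond_mix: "cond A g (mix I A x y) = cond A g x"
  by (simp add: cond_def mix_idem)

lemma P_int_sq:
  fixes g :: "('i \<Rightarrow> real) \<Rightarrow> real"
  assumes [measurable]: "g \<in> borel_measurable P" and "integrable P (\<lambda>x. (g x)\<^sup>2)"
  shows "integrable P g"
  by (rule finite_measure.square_integrable_imp_integrable[OF prob_space.finite_measure[OF prob_P] assms])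

lemma G1:
  fixes g :: "('i \<Rightarrow> real) \<Rightarrow> real"
  assumes [measurable]: "g \<in> borel_measurable P" and sq: "integrable P (\<lambda>x. (g x)\<^sup>2)"
  shows "integrable P (\<lambda>x. (cond A g x)\<^sup>2)"
    and "integral\<^sup>L P (\<lambda>x. (cond A g x)\<^sup>2) \<le> integral\<^sup>L P (\<lambda>x. (g x)\<^sup>2)"
proof -
  have gi: "integrable P g" by (rule P_int_sq) fact+
  have i1: "integrable (P \<Otimes>\<^sub>M P) (\<lambda>p. g (mix I A (fst p) (snd p)))"
    using transfer(1)[of g A] gi by simp
  have i2: "integrable (P \<Otimes>\<^sub>M P) (\<lambda>p. (g (mix I A (fst p) (snd p)))\<^sup>2)"
    using transfer(1)[of "\<lambda>x. (g x)\<^sup>2" A] sq by simp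
  have ae1: "AE x in P. integrable P (\<lambda>y. g (mix I A x y))"
    using PP.AE_integrable_fst'[OF i1] by simp
  have ae2: "AE x in P. integrable P (\<lambda>y. (g (mix I A x y))\<^sup>2)"
    using PP.AE_integrable_fst'[OF i2] by simp
  have ib: "integrable P (\<lambda>x. \<integral>y. (g (mix I A x y))\<^sup>2 \<partial>P)"
    using PP.integrable_fst'[OF i2] by simp
  have le: "AE x in P. (cond A g x)\<^sup>2 \<le> (\<integral>y. (g (mix I A x y))\<^sup>2 \<partial>P)"
    using ae1 ae2 by eventually_elim (unfold cond_def, rule jensen_sq[OF prob_P])
  show ci: "integrable P (\<lambda>x. (cond A g x)\<^sup>2)"
    by (rule Bochner_Integration.integrable_bound[OF ib]) (use le in \<open>auto elim!: eventually_mono\<close>)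
  have "integral\<^sup>L P (\<lambda>x. (cond A g x)\<^sup>2) \<le> (\<integral>x. (\<integral>y. (g (mix I A x y))\<^sup>2 \<partial>P) \<partial>P)"
    by (rule integral_mono_AE[OF ci ib le])
  also have "\<dots> = integral\<^sup>L (P \<Otimes>\<^sub>M P) (\<lambda>p. (g (mix I A (fst p) (snd p)))\<^sup>2)"
    using PP.integral_fst'[OF i2] by simp
  also have "\<dots> = integral\<^sup>L P (\<lambda>x. (g x)\<^sup>2)"
    using transfer(2)[of "\<lambda>x. (g x)\<^sup>2" A] by simp
  finally show "integral\<^sup>L P (\<lambda>x. (cond A g x)\<^sup>2) \<le> integral\<^sup>L P (\<lambda>x. (g x)\<^sup>2)" .
qed

lemma prod_bound: "\<bar>(a::real) * b\<bar> \<le> a\<^sup>2 + b\<^sup>2"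
proof -
  have "0 \<le> (\<bar>a\<bar> - \<bar>b\<bar>)\<^sup>2" by simp
  moreover have "(\<bar>a\<bar> - \<bar>b\<bar>)\<^sup>2 = a\<^sup>2 + b\<^sup>2 - 2 * (\<bar>a\<bar> * \<bar>b\<bar>)"
    by (simp add: power2_diff)
  moreover have "0 \<le> \<bar>a\<bar> * \<bar>b\<bar>" by simp
  ultimately have "\<bar>a\<bar> * \<bar>b\<bar> \<le> a\<^sup>2 + b\<^sup>2" by linarith
  then show ?thesis by (simp add: abs_mult)
qed

lemma int_prod:
  fixes u v :: "_ \<Rightarrow> real"
  assumes [measurable]: "u \<in> borel_measurable N" "v \<in> borel_measurable N"
    and "integrable N (\<lambda>x. (u x)\<^sup>2)" "integrable N (\<lambda>x. (v x)\<^sup>2)"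
  shows "integrable N (\<lambda>x. u x * v x)"
  by (rule Bochner_Integration.integrable_bound[OF Bochner_Integration.integrable_add[OF assms(3,4)]])
     (auto intro!: AE_I2 prod_bound)

lemma fst_int:
  fixes h :: "('i \<Rightarrow> real) \<Rightarrow> real"
  assumes [measurable]: "h \<in> borel_measurable P" and "integrable P h"
  shows "integrable (P \<Otimes>\<^sub>M P) (\<lambda>p. h (fst p))"
proof -
  have "integrable (P \<Otimes>\<^sub>M P) (\<lambda>p. h (mix I {} (fst p) (snd p)))"
    using transfer(1)[of h "{}"] assms by simp
  moreover have "integrable (P \<Otimes>\<^sub>M P) (\<lambda>p. h (mix I {} (fst p) (snd p))) \<longleftrightarrow> integrable (P \<Otimes>\<^sub>M P) (\<lambda>p. h (fst p))"
    by (rule Bochner_Integration.integrable_cong) (auto simp: space_pair_measure mix_empty)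
  ultimately show ?thesis by simp
qed

lemma pair_int:
  fixes g :: "('i \<Rightarrow> real) \<Rightarrow> real"
  assumes [measurable]: "g \<in> borel_measurable P" and sq: "integrable P (\<lambda>x. (g x)\<^sup>2)"
  shows "integrable (P \<Otimes>\<^sub>M P) (\<lambda>p. g (fst p) * g (mix I A (fst p) (snd p)))"
proof (rule int_prod)
  show "integrable (P \<Otimes>\<^sub>M P) (\<lambda>p. (g (fst p))\<^sup>2)"
    by (rule fst_int[of "\<lambda>x. (g x)\<^sup>2"]) (use sq in auto)
  show "integrable (P \<Otimes>\<^sub>M P) (\<lambda>p. (g (mix I A (fst p) (snd p)))\<^sup>2)"
    using transfer(1)[of "\<lambda>x. (g x)\<^sup>2" A] sq by simp
qed auto

lemma G2:
  fixes g :: "('i \<Rightarrow> real) \<Rightarrow> real"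
  assumes [measurable]: "g \<in> borel_measurable P" and sq: "integrable P (\<lambda>x. (g x)\<^sup>2)"
  shows "integral\<^sup>L P (\<lambda>x. (cond A g x)\<^sup>2) =
         integral\<^sup>L (P \<Otimes>\<^sub>M P) (\<lambda>p. g (fst p) * g (mix I A (fst p) (snd p)))"
proof -
  let ?c = "cond A g"
  have cw: "integrable P (\<lambda>w. ?c w * g w)"
    by (rule int_prod) (use G1(1)[OF assms, of A] sq in auto)
  have i2: "integrable (P \<Otimes>\<^sub>M P) (\<lambda>p. ?c (fst p) * g (mix I A (fst p) (snd p)))"
  proof -
    have "integrable (P \<Otimes>\<^sub>M P) (\<lambda>p. (\<lambda>w. ?c w * g w) (mix I A (fst p) (snd p)))"
      using transfer(1)[of "\<lambda>w. ?c w * g w" A] cw by simp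
    then show ?thesis by (simp add: cond_mix)
  qed
  have "integral\<^sup>L P (\<lambda>x. (?c x)\<^sup>2) = (\<integral>x. (\<integral>y. ?c x * g (mix I A x y) \<partial>P) \<partial>P)"
    by (simp add: power2_eq_square cond_def[of A g])
  also have "\<dots> = integral\<^sup>L (P \<Otimes>\<^sub>M P) (\<lambda>p. ?c (fst p) * g (mix I A (fst p) (snd p)))"
    using PP.integral_fst'[OF i2] by simp
  also have "\<dots> = integral\<^sup>L (P \<Otimes>\<^sub>M P) (\<lambda>p. (\<lambda>w. ?c w * g w) (mix I A (fst p) (snd p)))"
    by (simp add: cond_mix)
  also have "\<dots> = integral\<^sup>L P (\<lambda>w. ?c w * g w)"
    by (rule transfer(2)) simp
  also have "\<dots> = (\<integral>x. (\<integral>y. g x * g (mix I A x y) \<partial>P) \<partial>P)"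
    by (simp add: cond_def[of A g] mult.commute)
  also have "\<dots> = integral\<^sup>L (P \<Otimes>\<^sub>M P) (\<lambda>p. g (fst p) * g (mix I A (fst p) (snd p)))"
    using PP.integral_fst'[OF pair_int[OF assms, of A]] by simp
  finally show ?thesis .
qed

lemma G3:
  fixes g :: "('i \<Rightarrow> real) \<Rightarrow> real"
  assumes [measurable]: "g \<in> borel_measurable P" and gi: "integrable P g" and AB: "A \<subseteq> B"
  shows "AE x in P. cond B (cond A g) x = cond B g x"
proof -
  have i1: "integrable (P \<Otimes>\<^sub>M P) (\<lambda>p. g (mix I B (fst p) (snd p)))"
    using transfer(1)[of g B] gi by simp
  show ?thesis
    using PP.AE_integrable_fst'[OF i1]
  proof eventually_elim
    case (elim x)
    define h where "h = (\<lambda>w. g (mix I B x w))"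
    have hm[measurable]: "h \<in> borel_measurable P" unfolding h_def by measurable
    have hi: "integrable P h" using elim by (simp add: h_def)
    have i3: "integrable (P \<Otimes>\<^sub>M P) (\<lambda>p. h (mix I A (fst p) (snd p)))"
      using transfer(1)[of h A] hi by simp
    have "cond B (cond A g) x = (\<integral>y. (\<integral>z. h (mix I A y z) \<partial>P) \<partial>P)"
      by (simp add: cond_def h_def mix_nest[OF AB])
    also have "\<dots> = integral\<^sup>L (P \<Otimes>\<^sub>M P) (\<lambda>p. h (mix I A (fst p) (snd p)))"
      using PP.integral_fst'[OF i3] by simp
    also have "\<dots> = integral\<^sup>L P h"
      by (rule transfer(2)) simp
    also have "\<dots> = cond B g x" by (simp add: cond_def h_def)
    finally show ?case .
  qed
qed

definition EE :: "(('i \<Rightarrow> real) \<Rightarrow> real) \<Rightarrow> 'i set \<Rightarrow> real" where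
  "EE g A = integral\<^sup>L (P \<Otimes>\<^sub>M P) (\<lambda>p. g (fst p) * g (mix I A (fst p) (snd p)))"

theorem EE_mono:
  fixes g :: "('i \<Rightarrow> real) \<Rightarrow> real"
  assumes [measurable]: "g \<in> borel_measurable P" and sq: "integrable P (\<lambda>x. (g x)\<^sup>2)" and AB: "A \<subseteq> B"
  shows "EE g B \<le> EE g A"
proof -
  have gi: "integrable P g" by (rule P_int_sq) fact+
  have "EE g B = integral\<^sup>L P (\<lambda>x. (cond B g x)\<^sup>2)"
    unfolding EE_def by (rule G2[symmetric]) fact+
  also have "\<dots> = integral\<^sup>L P (\<lambda>x. (cond B (cond A g) x)\<^sup>2)"
  proof -
    have m1: "cond A g \<in> borel_measurable P" by (rule cond_meas) fact
    have m2: "cond B (cond A g) \<in> borel_measurable P" by (rule cond_meas) fact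
    have m3: "cond B g \<in> borel_measurable P" by (rule cond_meas) fact
    have ae: "AE x in P. (cond B g x)\<^sup>2 = (cond B (cond A g) x)\<^sup>2"
      using G3[OF assms(1) gi AB] by eventually_elim simp
    show ?thesis by (rule integral_cong_AE[OF _ _ ae]) (use m2 m3 in simp_all)
  qed
  also have "\<dots> \<le> integral\<^sup>L P (\<lambda>x. (cond A g x)\<^sup>2)"
    by (rule G1(2)) (use G1(1)[OF assms(1,2)] in auto)
  also have "\<dots> = EE g A"
    unfolding EE_def by (rule G2) fact+
  finally show ?thesis .
qed

end


lemma sum_ind_delta:
  fixes h :: "'p \<Rightarrow> real"
  assumes "finite T" "v \<in> T"
  shows "(\<Sum>p\<in>T. (if v = p then 1 else 0) * h p) = h v"
proof -
  have "(\<Sum>p\<in>T. (if v = p then 1 else 0) * h p) = (\<Sum>p\<in>T. if p = v then h p else 0)"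
    by (intro sum.cong) auto
  also have "\<dots> = h v" using assms by simp
  finally show ?thesis .
qed

lemma cov_formula:
  assumes "prob_space M" "integrable M X" "integrable M Z" "integrable M (\<lambda>\<omega>. X \<omega> * Z \<omega>)"
  shows "covariance M X Z = integral\<^sup>L M (\<lambda>\<omega>. X \<omega> * Z \<omega>) - integral\<^sup>L M X * integral\<^sup>L M Z"
proof -
  interpret prob_space M by fact
  let ?a = "integral\<^sup>L M X" and ?b = "integral\<^sup>L M Z"
  have e: "(\<lambda>\<omega>. (X \<omega> - ?a) * (Z \<omega> - ?b)) = (\<lambda>\<omega>. (X \<omega> * Z \<omega> - ?b * X \<omega>) - (?a * Z \<omega> - ?a * ?b))"
    by (auto simp: fun_eq_iff algebra_simps)
  show ?thesis
    unfolding covariance_def e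
    using assms(2-4)
    by (simp add: Bochner_Integration.integral_diff prob_space)
qed

lemma core_intro: "prob_space \<mu> \<Longrightarrow> sets \<mu> = sets borel \<Longrightarrow> finite I \<Longrightarrow> core \<mu> I"
  by (simp add: core_def)

theorem lemma6p1:
  fixes M :: "'a measure" and I :: "'i set" and \<mu> :: "real measure"
    and Y Y' :: "'i \<Rightarrow> 'a \<Rightarrow> real"
    and f :: "('i \<Rightarrow> real) \<Rightarrow> real"
    and S S' :: "'a \<Rightarrow> 'i set"
  assumes "prob_space M"
    and "finite I"
    and indepY: "prob_space.indep_vars M (\<lambda>_. borel) (case_sum Y Y') (I <+> I)"
    and distY: "\<And>i. i \<in> I \<Longrightarrow> distr M borel (Y i) = \<mu>"
    and distY': "\<And>i. i \<in> I \<Longrightarrow> distr M borel (Y' i) = \<mu>"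
    and f_meas: "f \<in> borel_measurable (PiM I (\<lambda>_. borel))"
    and f_sq: "integrable M (\<lambda>\<omega>. (f (\<lambda>i\<in>I. Y i \<omega>))\<^sup>2)"
    and S_meas: "S \<in> measurable M (count_space (Pow I))"
    and S'_meas: "S' \<in> measurable M (count_space (Pow I))"
    and indepS: "prob_space.indep_set M
        {(\<lambda>\<omega>. ((\<lambda>i\<in>I. Y i \<omega>), (\<lambda>i\<in>I. Y' i \<omega>))) -` A \<inter> space M | A.
           A \<in> sets ((PiM I (\<lambda>_. borel)) \<Otimes>\<^sub>M (PiM I (\<lambda>_. borel)))}
        {(\<lambda>\<omega>. (S \<omega>, S' \<omega>)) -` B \<inter> space M | B.
           B \<in> sets ((count_space (Pow I)) \<Otimes>\<^sub>M (count_space (Pow I)))}"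
    and sub: "AE \<omega> in M. S \<omega> \<subseteq> S' \<omega>"
  shows "covariance M (\<lambda>\<omega>. f (\<lambda>i\<in>I. Y i \<omega>)) (\<lambda>\<omega>. f (resample I Y Y' S \<omega>))
       \<ge> covariance M (\<lambda>\<omega>. f (\<lambda>i\<in>I. Y i \<omega>)) (\<lambda>\<omega>. f (resample I Y Y' S' \<omega>))"
proof (cases "I = {}")
  case True
  then show ?thesis by (simp add: resample_def restrict_def)
next
  case False
  interpret M: prob_space M by fact
  note finI = \<open>finite I\<close>
  obtain i0 where i0: "i0 \<in> I" using False by auto
  have rvall: "\<And>k. k \<in> I <+> I \<Longrightarrow> case_sum Y Y' k \<in> borel_measurable M"
    using indepY unfolding M.indep_vars_def2 by auto
  have rvY[measurable]: "\<And>i. i \<in> I \<Longrightarrow> Y i \<in> borel_measurable M"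
    using rvall[of "Inl _"] by auto
  have rvY'[measurable]: "\<And>i. i \<in> I \<Longrightarrow> Y' i \<in> borel_measurable M"
    using rvall[of "Inr _"] by auto
  have mu: "prob_space \<mu>"
    using distY[OF i0] M.prob_space_distr[OF rvY[OF i0]] by simp
  have sets_mu: "sets \<mu> = sets borel"
    using distY[OF i0] by (metis sets_distr)
  interpret C: core \<mu> I by (rule core_intro) fact+
  let ?PB = "PiM I (\<lambda>_. borel :: real measure)"
  let ?P = "PiM I (\<lambda>_. \<mu>)"
  let ?PZ = "PiM (I <+> I) (\<lambda>_. borel :: real measure)"
  let ?Q = "PiM (I <+> I) (\<lambda>_. \<mu>)"
  have sets_P: "sets ?P = sets ?PB"
    by (rule sets_PiM_cong) (auto simp: sets_mu)
  have sets_Q: "sets ?Q = sets ?PZ"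
    by (rule sets_PiM_cong) (auto simp: sets_mu)
  have sets_PP: "sets (?P \<Otimes>\<^sub>M ?P) = sets (?PB \<Otimes>\<^sub>M ?PB)"
    by (rule sets_pair_measure_cong) (rule sets_P)+
  have fP[measurable]: "f \<in> borel_measurable ?P"
    by (subst measurable_cong_sets[OF sets_P refl]) (rule f_meas)
  note [measurable] = C.mix_meas'

  define Z where "Z \<omega> = (\<lambda>k\<in>I <+> I. case_sum Y Y' k \<omega>)" for \<omega>
  define Yv where "Yv \<omega> = (\<lambda>i\<in>I. Y i \<omega>)" for \<omega>
  define Y'v where "Y'v \<omega> = (\<lambda>i\<in>I. Y' i \<omega>)" for \<omega>
  define W where "W \<omega> = (Yv \<omega>, Y'v \<omega>)" for \<omega>
  define V where "V \<omega> = (S \<omega>, S' \<omega>)" for \<omega>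
  let ?CC = "count_space (Pow I \<times> Pow I)"

  have Zm: "Z \<in> measurable M ?PZ"
    unfolding Z_def by (rule measurable_restrict) (use rvall in auto)
  have Yvm[measurable]: "Yv \<in> measurable M ?PB"
    unfolding Yv_def by (rule measurable_restrict) (use rvY in auto)
  have Y'vm[measurable]: "Y'v \<in> measurable M ?PB"
    unfolding Y'v_def by (rule measurable_restrict) (use rvY' in auto)
  have Wm: "W \<in> measurable M (?PB \<Otimes>\<^sub>M ?PB)"
    unfolding W_def by measurable
  have Vm: "V \<in> measurable M ?CC"
  proof -
    have "V \<in> measurable M (count_space (Pow I) \<Otimes>\<^sub>M count_space (Pow I))"
      unfolding V_def using S_meas S'_meas by measurable
    then show ?thesis
      using finI by (simp add: pair_measure_countable countable_finite)
  qed

  have DZ: "distr M ?PZ Z = ?Q"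
  proof -
    have "distr M ?PZ Z = PiM (I <+> I) (\<lambda>k. distr M borel (case_sum Y Y' k))"
      using M.indep_vars_iff_distr_eq_PiM'[where I="I <+> I" and M'="\<lambda>_. borel" and X="case_sum Y Y'"] indepY rvall False
      unfolding Z_def by auto
    also have "\<dots> = ?Q"
    proof (rule PiM_cong)
      fix k assume "k \<in> I <+> I"
      then show "distr M borel (case_sum Y Y' k) = \<mu>"
        by (cases k) (auto simp: distY distY')
    qed simp
    finally show ?thesis .
  qed

  have reind: "distr M ?PB (\<lambda>\<omega>. \<lambda>n\<in>I. Z \<omega> (g n)) = ?P"
    if g: "inj_on g I" "g \<in> I \<rightarrow> I <+> I" for g
  proof -
    have gm: "(\<lambda>z. \<lambda>n\<in>I. z (g n)) \<in> measurable ?PZ ?PB"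
      by (rule measurable_restrict) (use g in \<open>auto intro!: measurable_component_singleton\<close>)
    have "distr M ?PB (\<lambda>\<omega>. \<lambda>n\<in>I. Z \<omega> (g n)) = distr (distr M ?PZ Z) ?PB (\<lambda>z. \<lambda>n\<in>I. z (g n))"
      using distr_distr[OF gm Zm] by (simp add: comp_def)
    also have "\<dots> = distr ?Q ?P (\<lambda>z. \<lambda>n\<in>I. z (g n))"
      unfolding DZ by (rule distr_cong) (use sets_P in auto)
    also have "\<dots> = ?P"
      using distr_PiM_reindex[of "I <+> I" "\<lambda>_. \<mu>" g I] g mu by simp
    finally show ?thesis .
  qed
  have DY: "distr M ?PB Yv = ?P"
  proof -
    have "Yv = (\<lambda>\<omega>. \<lambda>n\<in>I. Z \<omega> (Inl n))" by (auto simp: Yv_def Z_def fun_eq_iff)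
    then show ?thesis using reind[of Inl] by (simp add: inj_on_def Pi_iff Plus_def)
  qed
  have DY': "distr M ?PB Y'v = ?P"
  proof -
    have "Y'v = (\<lambda>\<omega>. \<lambda>n\<in>I. Z \<omega> (Inr n))" by (auto simp: Y'v_def Z_def fun_eq_iff)
    then show ?thesis using reind[of Inr] by (simp add: inj_on_def Pi_iff Plus_def)
  qed

  have indYY: "M.indep_var ?PB Yv ?PB Y'v"
  proof -
    have iv: "M.indep_var (PiM (Inl ` I) (\<lambda>_. borel)) (\<lambda>\<omega>. restrict (\<lambda>k. case_sum Y Y' k \<omega>) (Inl ` I))
                        (PiM (Inr ` I) (\<lambda>_. borel)) (\<lambda>\<omega>. restrict (\<lambda>k. case_sum Y Y' k \<omega>) (Inr ` I))"
      by (rule M.indep_var_restrict[OF indepY]) auto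
    have m1: "(\<lambda>z. \<lambda>n\<in>I. z (Inl n)) \<in> measurable (PiM (Inl ` I) (\<lambda>_. borel :: real measure)) ?PB"
      by (rule measurable_restrict) (auto intro!: measurable_component_singleton)
    have m2: "(\<lambda>z. \<lambda>n\<in>I. z (Inr n)) \<in> measurable (PiM (Inr ` I) (\<lambda>_. borel :: real measure)) ?PB"
      by (rule measurable_restrict) (auto intro!: measurable_component_singleton)
    have "M.indep_var ?PB ((\<lambda>z. \<lambda>n\<in>I. z (Inl n)) \<circ> (\<lambda>\<omega>. restrict (\<lambda>k. case_sum Y Y' k \<omega>) (Inl ` I)))
                       ?PB ((\<lambda>z. \<lambda>n\<in>I. z (Inr n)) \<circ> (\<lambda>\<omega>. restrict (\<lambda>k. case_sum Y Y' k \<omega>) (Inr ` I)))"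
      by (rule M.indep_var_compose[OF iv m1 m2])
    moreover have "((\<lambda>z. \<lambda>n\<in>I. z (Inl n)) \<circ> (\<lambda>\<omega>. restrict (\<lambda>k. case_sum Y Y' k \<omega>) (Inl ` I))) = Yv"
      by (auto simp: Yv_def fun_eq_iff)
    moreover have "((\<lambda>z. \<lambda>n\<in>I. z (Inr n)) \<circ> (\<lambda>\<omega>. restrict (\<lambda>k. case_sum Y Y' k \<omega>) (Inr ` I))) = Y'v"
      by (auto simp: Y'v_def fun_eq_iff)
    ultimately show ?thesis by simp
  qed
  have DW: "distr M (?PB \<Otimes>\<^sub>M ?PB) W = ?P \<Otimes>\<^sub>M ?P"
    using indYY[unfolded M.indep_var_distribution_eq] DY DY' unfolding W_def by simp

  have intW: "integrable M (\<lambda>\<omega>. G (W \<omega>)) \<longleftrightarrow> integrable (?P \<Otimes>\<^sub>M ?P) G"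
    and intW2: "integral\<^sup>L M (\<lambda>\<omega>. G (W \<omega>)) = integral\<^sup>L (?P \<Otimes>\<^sub>M ?P) G"
    if Gm: "G \<in> borel_measurable (?P \<Otimes>\<^sub>M ?P)" for G :: "_ \<Rightarrow> real"
  proof -
    have Gm': "G \<in> borel_measurable (?PB \<Otimes>\<^sub>M ?PB)"
      using Gm unfolding measurable_cong_sets[OF sets_PP refl, of borel] .
    show "integrable M (\<lambda>\<omega>. G (W \<omega>)) \<longleftrightarrow> integrable (?P \<Otimes>\<^sub>M ?P) G"
      using integrable_distr_eq[OF Wm Gm'] DW by simp
    show "integral\<^sup>L M (\<lambda>\<omega>. G (W \<omega>)) = integral\<^sup>L (?P \<Otimes>\<^sub>M ?P) G"
      using integral_distr[OF Wm Gm'] DW by simp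
  qed

  define FW where "FW = {(\<lambda>\<omega>. ((\<lambda>i\<in>I. Y i \<omega>), (\<lambda>i\<in>I. Y' i \<omega>))) -` A \<inter> space M | A.
           A \<in> sets ((PiM I (\<lambda>_. borel)) \<Otimes>\<^sub>M (PiM I (\<lambda>_. borel :: real measure)))}"
  define FV where "FV = {(\<lambda>\<omega>. (S \<omega>, S' \<omega>)) -` B \<inter> space M | B.
           B \<in> sets ((count_space (Pow I)) \<Otimes>\<^sub>M (count_space (Pow I)))}"
  have FWs: "Int_stable FW"
    unfolding FW_def Int_stable_def
    apply auto
    apply (rule_tac x="A \<inter> Aa" in exI)
    apply auto
    done
  have FVs: "Int_stable FV"
    unfolding FV_def Int_stable_def
    apply auto
    apply (rule_tac x="B \<inter> Ba" in exI)
    apply auto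
    done
  have indSig: "M.indep_set (sigma_sets (space M) FW) (sigma_sets (space M) FV)"
    by (rule M.indep_set_sigma_sets[OF indepS[folded FW_def FV_def] FWs FVs])
  have CCeq: "count_space (Pow I) \<Otimes>\<^sub>M count_space (Pow I) = ?CC"
    using finI by (simp add: pair_measure_countable countable_finite)
  define ind where "ind p \<omega> = (if V \<omega> = p then 1 else 0 :: real)" for p \<omega>
  define c where "c p = integral\<^sup>L M (ind p)" for p
  have indm[measurable]: "ind p \<in> borel_measurable M" for p
  proof -
    have "(\<lambda>v. if v = p then 1 else 0 :: real) \<in> borel_measurable ?CC" by simp
    from measurable_comp[OF Vm this] show ?thesis by (simp add: ind_def[abs_def] comp_def)
  qed
  have indi: "integrable M (ind p)" for p
    by (rule M.integrable_const_bound[where B=1]) (auto simp: ind_def)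
  have c_nonneg: "0 \<le> c p" for p
    unfolding c_def by (rule integral_nonneg_AE) (auto simp: ind_def)

  have termL: "integrable M (\<lambda>\<omega>. ind p \<omega> * G (W \<omega>)) \<and> integral\<^sup>L M (\<lambda>\<omega>. ind p \<omega> * G (W \<omega>)) = c p * integral\<^sup>L (?P \<Otimes>\<^sub>M ?P) G"
    if Gm: "G \<in> borel_measurable (?P \<Otimes>\<^sub>M ?P)" and Gi: "integrable (?P \<Otimes>\<^sub>M ?P) G" for p G
  proof -
    have Gm': "G \<in> borel_measurable (?PB \<Otimes>\<^sub>M ?PB)"
      using Gm unfolding measurable_cong_sets[OF sets_PP refl, of borel] .
    have iv': "M.indep_var borel (\<lambda>\<omega>. G (W \<omega>)) borel (ind p)"
      unfolding M.indep_var_eq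
    proof (intro conjI)
      show "(\<lambda>\<omega>. G (W \<omega>)) \<in> borel_measurable M" using measurable_comp[OF Wm Gm'] by (simp add: comp_def)
      show "ind p \<in> borel_measurable M" by (rule indm)
      have s1: "{(\<lambda>\<omega>. G (W \<omega>)) -` A \<inter> space M | A. A \<in> sets borel} \<subseteq> FW"
      proof safe
        fix A :: "real set" assume A: "A \<in> sets borel"
        have "(\<lambda>\<omega>. G (W \<omega>)) -` A \<inter> space M =
              (\<lambda>\<omega>. ((\<lambda>i\<in>I. Y i \<omega>), (\<lambda>i\<in>I. Y' i \<omega>))) -` (G -` A \<inter> space (?PB \<Otimes>\<^sub>M ?PB)) \<inter> space M"
          using measurable_space[OF Wm] by (auto simp: W_def Yv_def Y'v_def)
        moreover have "G -` A \<inter> space (?PB \<Otimes>\<^sub>M ?PB) \<in> sets (?PB \<Otimes>\<^sub>M ?PB)"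
          using measurable_sets[OF Gm' A] .
        ultimately show "(\<lambda>\<omega>. G (W \<omega>)) -` A \<inter> space M \<in> FW"
          unfolding FW_def by blast
      qed
      have s2: "{ind p -` A \<inter> space M | A. A \<in> sets borel} \<subseteq> FV"
      proof safe
        fix A :: "real set" assume A: "A \<in> sets borel"
        have "ind p -` A \<inter> space M =
              (\<lambda>\<omega>. (S \<omega>, S' \<omega>)) -` {v \<in> Pow I \<times> Pow I. (if v = p then 1 else 0 :: real) \<in> A} \<inter> space M"
          using measurable_space[OF Vm] by (auto simp: ind_def V_def)
        moreover have "{v \<in> Pow I \<times> Pow I. (if v = p then 1 else 0 :: real) \<in> A} \<in> sets (count_space (Pow I) \<Otimes>\<^sub>M count_space (Pow I))"
          unfolding CCeq by auto
        ultimately show "ind p -` A \<inter> space M \<in> FV"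
          unfolding FV_def by blast
      qed
      show "M.indep_set (sigma_sets (space M) {(\<lambda>\<omega>. G (W \<omega>)) -` A \<inter> space M | A. A \<in> sets borel})
                        (sigma_sets (space M) {ind p -` A \<inter> space M | A. A \<in> sets borel})"
        using indSig sigma_sets_subseteq[OF s1, of "space M"] sigma_sets_subseteq[OF s2, of "space M"]
        unfolding M.indep_sets2_eq by blast
    qed
    have GWi: "integrable M (\<lambda>\<omega>. G (W \<omega>))" using intW[OF Gm] Gi by simp
    have "integrable M (\<lambda>\<omega>. G (W \<omega>) * ind p \<omega>)"
      by (rule M.indep_var_integrable[OF iv' GWi indi])
    moreover have "integral\<^sup>L M (\<lambda>\<omega>. G (W \<omega>) * ind p \<omega>) = integral\<^sup>L M (\<lambda>\<omega>. G (W \<omega>)) * integral\<^sup>L M (ind p)"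
      by (rule M.indep_var_lebesgue_integral[OF iv' GWi indi])
    ultimately show ?thesis
      using intW2[OF Gm] by (simp add: mult.commute c_def)
  qed

  have SP: "S \<omega> \<in> Pow I" "S' \<omega> \<in> Pow I" if "\<omega> \<in> space M" for \<omega>
    using measurable_space[OF S_meas that] measurable_space[OF S'_meas that] by auto
  have res: "resample I Y Y' T \<omega> = mix I (T \<omega>) (Yv \<omega>) (Y'v \<omega>)" for T \<omega>
    by (auto simp: resample_def mix_def Yv_def Y'v_def fun_eq_iff)

  define Gs where "Gs A q = f (fst q) * f (mix I A (fst q) (snd q))" for A q
  define Hs where "Hs A q = f (mix I A (fst q) (snd q))" for A q
  have Gsm[measurable]: "Gs A \<in> borel_measurable (?P \<Otimes>\<^sub>M ?P)" for A
    unfolding Gs_def[abs_def] by measurable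
  have Hsm[measurable]: "Hs A \<in> borel_measurable (?P \<Otimes>\<^sub>M ?P)" for A
    unfolding Hs_def[abs_def] by measurable
  have fsqP: "integrable ?P (\<lambda>x. (f x)\<^sup>2)"
  proof -
    have "(\<lambda>x. (f x)\<^sup>2) \<in> borel_measurable ?PB" using f_meas by measurable
    from integrable_distr_eq[OF Yvm this] DY f_sq show ?thesis by (simp add: Yv_def)
  qed
  have fiP: "integrable ?P f" by (rule C.P_int_sq) (use fsqP in auto)
  have Gsi: "integrable (?P \<Otimes>\<^sub>M ?P) (Gs A)" for A
    unfolding Gs_def[abs_def] by (rule C.pair_int) (use fsqP in auto)
  have Hsi: "integrable (?P \<Otimes>\<^sub>M ?P) (Hs A)" for A
    unfolding Hs_def[abs_def] using C.transfer(1)[OF fP, of A] fiP by simp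
  have HsI: "integral\<^sup>L (?P \<Otimes>\<^sub>M ?P) (Hs A) = integral\<^sup>L ?P f" for A
    unfolding Hs_def[abs_def] using C.transfer(2)[OF fP, of A] by simp
  have GsI: "integral\<^sup>L (?P \<Otimes>\<^sub>M ?P) (Gs A) = C.EE f A" for A
    unfolding Gs_def[abs_def] C.EE_def by simp

  let ?X = "\<lambda>\<omega>. f (\<lambda>i\<in>I. Y i \<omega>)"
  have Xi: "integrable M ?X"
  proof -
    have "integrable M (\<lambda>\<omega>. f (Yv \<omega>))"
      using integrable_distr_eq[OF Yvm f_meas] DY fiP by simp
    then show ?thesis by (simp add: Yv_def)
  qed
  let ?T = "Pow I \<times> Pow I"
  have finT: "finite ?T" using finI by simp

  have decomp: "(integrable M (\<lambda>\<omega>. f (resample I Y Y' T \<omega>)) \<and>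
        integral\<^sup>L M (\<lambda>\<omega>. f (resample I Y Y' T \<omega>)) = (\<Sum>p\<in>?T. c p * integral\<^sup>L ?P f)) \<and>
      (integrable M (\<lambda>\<omega>. ?X \<omega> * f (resample I Y Y' T \<omega>)) \<and>
        integral\<^sup>L M (\<lambda>\<omega>. ?X \<omega> * f (resample I Y Y' T \<omega>)) = (\<Sum>p\<in>?T. c p * C.EE f (sel p)))"
    if sel: "\<And>\<omega>. \<omega> \<in> space M \<Longrightarrow> T \<omega> = sel (V \<omega>)" for T sel
  proof -
    have e1: "f (resample I Y Y' T \<omega>) = (\<Sum>p\<in>?T. ind p \<omega> * Hs (sel p) (W \<omega>))" if "\<omega> \<in> space M" for \<omega>
    proof -
      have "(\<Sum>p\<in>?T. ind p \<omega> * Hs (sel p) (W \<omega>)) = Hs (sel (V \<omega>)) (W \<omega>)"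
        unfolding ind_def by (rule sum_ind_delta[OF finT]) (use SP[OF that] in \<open>simp add: V_def\<close>)
      then show ?thesis using sel[OF that] by (simp add: res Hs_def W_def)
    qed
    have e2: "?X \<omega> * f (resample I Y Y' T \<omega>) = (\<Sum>p\<in>?T. ind p \<omega> * Gs (sel p) (W \<omega>))" if "\<omega> \<in> space M" for \<omega>
    proof -
      have "(\<Sum>p\<in>?T. ind p \<omega> * Gs (sel p) (W \<omega>)) = Gs (sel (V \<omega>)) (W \<omega>)"
        unfolding ind_def by (rule sum_ind_delta[OF finT]) (use SP[OF that] in \<open>simp add: V_def\<close>)
      then show ?thesis using sel[OF that] by (simp add: res Gs_def W_def Yv_def)
    qed
    have i1: "integrable M (\<lambda>\<omega>. \<Sum>p\<in>?T. ind p \<omega> * Hs (sel p) (W \<omega>))"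
      by (rule Bochner_Integration.integrable_sum) (use termL[OF Hsm Hsi] in auto)
    have i2: "integrable M (\<lambda>\<omega>. \<Sum>p\<in>?T. ind p \<omega> * Gs (sel p) (W \<omega>))"
      by (rule Bochner_Integration.integrable_sum) (use termL[OF Gsm Gsi] in auto)
    have I1: "integral\<^sup>L M (\<lambda>\<omega>. \<Sum>p\<in>?T. ind p \<omega> * Hs (sel p) (W \<omega>)) = (\<Sum>p\<in>?T. c p * integral\<^sup>L ?P f)"
      by (subst Bochner_Integration.integral_sum) (use termL[OF Hsm Hsi] HsI in auto)
    have I2: "integral\<^sup>L M (\<lambda>\<omega>. \<Sum>p\<in>?T. ind p \<omega> * Gs (sel p) (W \<omega>)) = (\<Sum>p\<in>?T. c p * C.EE f (sel p))"
      by (subst Bochner_Integration.integral_sum) (use termL[OF Gsm Gsi] GsI in auto)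
    show ?thesis
      using i1 i2 I1 I2 e1 e2
      by (simp cong: Bochner_Integration.integrable_cong Bochner_Integration.integral_cong)
  qed
  have hS: "\<And>\<omega>. \<omega> \<in> space M \<Longrightarrow> S \<omega> = fst (V \<omega>)" by (simp add: V_def)
  have hS': "\<And>\<omega>. \<omega> \<in> space M \<Longrightarrow> S' \<omega> = snd (V \<omega>)" by (simp add: V_def)
  note dS = decomp[of S fst, OF hS] and dS' = decomp[of S' snd, OF hS']

  have cmp: "(\<Sum>p\<in>?T. c p * C.EE f (snd p)) \<le> (\<Sum>p\<in>?T. c p * C.EE f (fst p))"
  proof (rule sum_mono)
    fix p assume p: "p \<in> ?T"
    show "c p * C.EE f (snd p) \<le> c p * C.EE f (fst p)"
    proof (cases "fst p \<subseteq> snd p")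
      case True
      then show ?thesis
        by (intro mult_left_mono c_nonneg C.EE_mono fP fsqP)
    next
      case False
      have "AE \<omega> in M. ind p \<omega> = 0"
        using sub by eventually_elim (use False in \<open>auto simp: ind_def V_def\<close>)
      then have "c p = 0" unfolding c_def by (subst integral_cong_AE[where g="\<lambda>_. 0"]) auto
      then show ?thesis by simp
    qed
  qed
  show ?thesis
    using cov_formula[OF \<open>prob_space M\<close> Xi] dS dS' cmp by simp
qed

end
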